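(* Let $(\mathcal{X},\preceq)$ be an $\omega$-chain complete partially ordered set and $\Lambda$ a set. For finite disjoint $\mathcal{I},\mathcal{O}\subseteq\Lambda$ let $\mathfrak{N}_{\mathcal{I},\mathcal{O}}$ be the set of all $\omega$-continuous functions $\mathcal{X}^{\mathcal{I}}\to\mathcal{X}^{\mathcal{O}}$, and $\mathfrak{N}$ their union. For $s\in\mathfrak{N}_{\mathcal{I},\mathcal{O}}$ let $\Gamma(s)=\{\{i,o\}\mid i\in\mathcal{I},o\in\mathcal{O}\}$ and let $\phi^s_{i,o}(\mathbf{x})$ be the least $x_i\in\mathcal{X}$ with $s(\mathbf{x}\cup\{(i,x_i)\})(o)=x_i$. Then the resulting structure $(\mathfrak{N},\lambda,\parallel,\Gamma,\gamma)$ is a functional $\Lambda$-system algebra over $\mathcal{X}$; in particular, $\mathfrak{N}$ is closed under parallel composition and $\gamma_{i,o}(s)\in\mathfrak{N}_{\mathcal{I}\setminus\{i\},\mathcal{O}\setminus\{o\}}$ for all $s\in\mathfrak{N}_{\mathcal{I},\mathcal{O}}$, $i\in\mathcal{I}$, $o\in\mathcal{O}$.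
   Context: An $\omega$-chain is a sequence $(x_n)_{n\in\mathbb{N}}$ with $x_i\preceq x_j$ for $i\le j$; an $\omega$-CPO is a poset with least element in which every $\omega$-chain has a supremum. $\mathcal{X}^{\mathcal{I}}$ (functions $\mathcal{I}\to\mathcal{X}$) is ordered componentwise. $f$ is $\omega$-continuous if for every $\omega$-chain $C$, $\sup f(C)$ exists and equals $f(\sup C)$; such least fixed points exist. Operations: $\lambda(s)=\mathcal{I}\cup\mathcal{O}$; for $s_j\in\mathfrak{N}_{\mathcal{I}_j,\mathcal{O}_j}$ with the four index sets pairwise disjoint, $(s_1\parallel s_2)(\mathbf{x})(o_j)=s_j(\mathbf{x}|_{\mathcal{I}_j})(o_j)$ for $o_j\in\mathcal{O}_j$; $\gamma_{i,o}(s)(\mathbf{x})=s(\mathbf{x}\cup\{(i,\phi^s_{i,o}(\mathbf{x}))\})|_{\mathcal{O}\setminus\{o\}}$ for $\mathbf{x}\in\mathcal{X}^{\mathcal{I}\setminus\{i\}}$. A functional $\Lambda$-system algebra over $\mathcal{X}$ is such a structure whose system set is closed under $\parallel$ and $\gamma$ and in which, for systems with disjoint interface sets, $\{i,o\}\in\Gamma(s_1\parallel s_2)\iff\{i,o\}\in\Gamma(s_j)$ for $i,o\in\lambda(s_j)$. *)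

theory Defs
  imports "HOL-Library.FuncSet"
begin

definition omega_chain :: "(nat \<Rightarrow> 'a::order) \<Rightarrow> bool" where
  "omega_chain c \<longleftrightarrow> (\<forall>m n. m \<le> n \<longrightarrow> c m \<le> c n)"

definition is_lub :: "'a::order set \<Rightarrow> 'a \<Rightarrow> bool" where
  "is_lub A u \<longleftrightarrow> (\<forall>a\<in>A. a \<le> u) \<and> (\<forall>v. (\<forall>a\<in>A. a \<le> v) \<longrightarrow> u \<le> v)"

definition omega_cpo :: "'a::order itself \<Rightarrow> bool" where
  "omega_cpo T \<longleftrightarrow> (\<exists>b::'a. \<forall>y. b \<le> y) \<and>
     (\<forall>c::nat \<Rightarrow> 'a. omega_chain c \<longrightarrow> (\<exists>u. is_lub (range c) u))"

text \<open>An element of X^I is a function extensional on I (undefined outside I).\<close>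
definition pw_le :: "'l set \<Rightarrow> ('l \<Rightarrow> 'x::order) \<Rightarrow> ('l \<Rightarrow> 'x) \<Rightarrow> bool" where
  "pw_le I x y \<longleftrightarrow> (\<forall>i\<in>I. x i \<le> y i)"

definition lub_on :: "'l set \<Rightarrow> ('l \<Rightarrow> 'x::order) set \<Rightarrow> ('l \<Rightarrow> 'x) \<Rightarrow> bool" where
  "lub_on I A u \<longleftrightarrow> u \<in> I \<rightarrow>\<^sub>E UNIV \<and> (\<forall>a\<in>A. pw_le I a u) \<and>
     (\<forall>v\<in>I \<rightarrow>\<^sub>E UNIV. (\<forall>a\<in>A. pw_le I a v) \<longrightarrow> pw_le I u v)"

definition omega_chain_on :: "'l set \<Rightarrow> (nat \<Rightarrow> ('l \<Rightarrow> 'x::order)) \<Rightarrow> bool" where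
  "omega_chain_on I c \<longleftrightarrow> (\<forall>n. c n \<in> I \<rightarrow>\<^sub>E UNIV) \<and> (\<forall>m n. m \<le> n \<longrightarrow> pw_le I (c m) (c n))"

definition omega_cont :: "'l set \<Rightarrow> 'l set \<Rightarrow> (('l \<Rightarrow> 'x::order) \<Rightarrow> ('l \<Rightarrow> 'x)) \<Rightarrow> bool" where
  "omega_cont I Out f \<longleftrightarrow> (\<forall>c u. omega_chain_on I c \<and> lub_on I (range c) u \<longrightarrow>
       lub_on Out (f ` range c) (f u))"

record ('l, 'x) sys =
  ins :: "'l set"
  outs :: "'l set"
  fn :: "('l \<Rightarrow> 'x) \<Rightarrow> ('l \<Rightarrow> 'x)"

definition NIO :: "'l set \<Rightarrow> 'l set \<Rightarrow> 'l set \<Rightarrow> ('l, 'x::order) sys set" where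
  "NIO Lam I Out = {s. ins s = I \<and> outs s = Out \<and> finite I \<and> finite Out \<and> I \<inter> Out = {} \<and>
       I \<subseteq> Lam \<and> Out \<subseteq> Lam \<and>
       fn s \<in> (I \<rightarrow>\<^sub>E UNIV) \<rightarrow>\<^sub>E (Out \<rightarrow>\<^sub>E UNIV) \<and> omega_cont I Out (fn s)}"

definition NN :: "'l set \<Rightarrow> ('l, 'x::order) sys set" where
  "NN Lam = (\<Union>I Out. NIO Lam I Out)"

definition lam :: "('l, 'x) sys \<Rightarrow> 'l set" where
  "lam s = ins s \<union> outs s"

definition Gam :: "('l, 'x) sys \<Rightarrow> 'l set set" where
  "Gam s = {{i, k} | i k. i \<in> ins s \<and> k \<in> outs s}"

definition par :: "('l, 'x) sys \<Rightarrow> ('l, 'x) sys \<Rightarrow> ('l, 'x) sys" where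
  "par s1 s2 = \<lparr>ins = ins s1 \<union> ins s2, outs = outs s1 \<union> outs s2,
     fn = (\<lambda>x\<in>(ins s1 \<union> ins s2) \<rightarrow>\<^sub>E UNIV. \<lambda>k\<in>outs s1 \<union> outs s2.
             if k \<in> outs s1 then fn s1 (restrict x (ins s1)) k
             else fn s2 (restrict x (ins s2)) k)\<rparr>"

definition phi :: "('l, 'x::order) sys \<Rightarrow> 'l \<Rightarrow> 'l \<Rightarrow> ('l \<Rightarrow> 'x) \<Rightarrow> 'x" where
  "phi s i k x = (LEAST xi. fn s (x(i := xi)) k = xi)"

definition gam :: "'l \<Rightarrow> 'l \<Rightarrow> ('l, 'x::order) sys \<Rightarrow> ('l, 'x) sys" where
  "gam i k s = \<lparr>ins = ins s - {i}, outs = outs s - {k},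
     fn = (\<lambda>x\<in>(ins s - {i}) \<rightarrow>\<^sub>E UNIV.
             restrict (fn s (x(i := phi s i k x))) (outs s - {k}))\<rparr>"

end

theory Submission
  imports Defs
begin

lemma is_lub_unique: "is_lub A u \<Longrightarrow> is_lub A v \<Longrightarrow> u = (v::'a::order)"
  unfolding is_lub_def by (meson order.antisym)

lemma lub_on_iff:
  "lub_on I A u \<longleftrightarrow> u \<in> I \<rightarrow>\<^sub>E UNIV \<and> (\<forall>j\<in>I. is_lub ((\<lambda>a. a j) ` A) (u j))"
proof
  assume H: "lub_on I A u"
  hence uE: "u \<in> I \<rightarrow>\<^sub>E UNIV" and ub: "\<forall>a\<in>A. pw_le I a u"
    and le: "\<forall>v\<in>I \<rightarrow>\<^sub>E UNIV. (\<forall>a\<in>A. pw_le I a v) \<longrightarrow> pw_le I u v"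
    by (auto simp: lub_on_def)
  show "u \<in> I \<rightarrow>\<^sub>E UNIV \<and> (\<forall>j\<in>I. is_lub ((\<lambda>a. a j) ` A) (u j))"
  proof (intro conjI ballI uE)
    fix j assume j: "j \<in> I"
    show "is_lub ((\<lambda>a. a j) ` A) (u j)"
      unfolding is_lub_def
    proof (intro conjI allI impI ballI)
      fix b assume "b \<in> (\<lambda>a. a j) ` A" thus "b \<le> u j" using ub j by (auto simp: pw_le_def)
    next
      fix w assume w: "\<forall>b\<in>(\<lambda>a. a j) ` A. b \<le> w"
      let ?v = "u(j := w)"
      have "?v \<in> I \<rightarrow>\<^sub>E UNIV" using uE j by (auto simp: PiE_def extensional_def)
      moreover have "\<forall>a\<in>A. pw_le I a ?v" using ub w by (auto simp: pw_le_def)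
      ultimately have "pw_le I u ?v" using le by blast
      thus "u j \<le> w" using j by (auto simp: pw_le_def)
    qed
  qed
next
  assume H: "u \<in> I \<rightarrow>\<^sub>E UNIV \<and> (\<forall>j\<in>I. is_lub ((\<lambda>a. a j) ` A) (u j))"
  show "lub_on I A u" unfolding lub_on_def
  proof (intro conjI ballI impI)
    show "u \<in> I \<rightarrow>\<^sub>E UNIV" using H by blast
  next
    fix a assume "a \<in> A" thus "pw_le I a u" using H by (auto simp: pw_le_def is_lub_def)
  next
    fix v assume "v \<in> I \<rightarrow>\<^sub>E UNIV" "\<forall>a\<in>A. pw_le I a v"
    thus "pw_le I u v" using H by (auto simp: pw_le_def is_lub_def)
  qed
qed

lemma cont_mono:
  assumes "omega_cont I Out f" "x \<in> I \<rightarrow>\<^sub>E UNIV" "y \<in> I \<rightarrow>\<^sub>E UNIV" "pw_le I x y"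
  shows "pw_le Out (f x) (f y)"
proof -
  define c where "c = (\<lambda>n::nat. if n = 0 then x else y)"
  have "x = c 0" "y = c 1" by (simp_all add: c_def)
  hence rc: "range c = {x, y}" by (auto simp: c_def)
  have ch: "omega_chain_on I c" using assms by (auto simp: omega_chain_on_def c_def pw_le_def)
  have "lub_on I (range c) y" unfolding rc lub_on_def using assms by (auto simp: pw_le_def)
  hence "lub_on Out (f ` range c) (f y)" using assms(1) ch by (auto simp: omega_cont_def)
  thus ?thesis unfolding rc lub_on_def by auto
qed

lemma NIO_joint:
  assumes s: "s \<in> NIO Lam I Out" and i: "i \<in> I"
    and c: "omega_chain_on (I - {i}) c" and u: "lub_on (I - {i}) (range c) u"
    and p: "omega_chain p" and pl: "is_lub (range p) l"
  shows "lub_on Out (range (\<lambda>n. fn s ((c n)(i := p n)))) (fn s (u(i := l)))"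
proof -
  define d where "d = (\<lambda>n. (c n)(i := p n))"
  have "omega_chain_on I d"
    using c p i unfolding omega_chain_on_def d_def omega_chain_def pw_le_def
    by (auto simp: PiE_def extensional_def)
  moreover have "lub_on I (range d) (u(i := l))"
    unfolding lub_on_iff
  proof (intro conjI ballI)
    show "u(i:=l) \<in> I \<rightarrow>\<^sub>E UNIV" using u i by (auto simp: lub_on_def PiE_def extensional_def)
    fix j assume j: "j \<in> I"
    show "is_lub ((\<lambda>a. a j) ` range d) ((u(i := l)) j)"
    proof (cases "j = i")
      case True
      have "(\<lambda>a. a j) ` range d = range p" using True by (simp add: d_def image_image)
      thus ?thesis using True pl by simp
    next
      case False
      have "(\<lambda>a. a j) ` range d = (\<lambda>a. a j) ` range c" using False by (simp add: d_def image_image)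
      thus ?thesis using False u j unfolding lub_on_iff by auto
    qed
  qed
  ultimately have "lub_on Out (fn s ` range d) (fn s (u(i:=l)))"
    using s by (auto simp: NIO_def omega_cont_def)
  thus ?thesis by (simp add: d_def image_image)
qed

lemma kleene:
  fixes g :: "'x::order \<Rightarrow> 'x"
  assumes cpo: "omega_cpo TYPE('x)"
    and mono: "\<And>a b. a \<le> b \<Longrightarrow> g a \<le> g b"
    and cont: "\<And>t l. omega_chain t \<Longrightarrow> is_lub (range t) l \<Longrightarrow> is_lub (range (\<lambda>n. g (t n))) (g l)"
  shows "\<exists>a. g a = a \<and> (\<forall>p. g p \<le> p \<longrightarrow> a \<le> p)"
proof -
  obtain b :: 'x where b: "\<forall>y. b \<le> y" using cpo by (auto simp: omega_cpo_def)
  define t where "t n = (g ^^ n) b" for n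
  have gt: "g (t n) = t (Suc n)" for n by (simp add: t_def)
  have step: "t n \<le> t (Suc n)" for n
  proof (induction n)
    case 0 show ?case using b by (simp add: t_def)
  next
    case (Suc n) thus ?case using mono gt by metis
  qed
  have ch: "omega_chain t" unfolding omega_chain_def using step by (auto intro: lift_Suc_mono_le)
  then obtain a where a: "is_lub (range t) a" using cpo by (auto simp: omega_cpo_def)
  have "is_lub (range (\<lambda>n. g (t n))) (g a)" using cont ch a by blast
  moreover have "is_lub (range (\<lambda>n. g (t n))) a"
    unfolding is_lub_def
  proof (intro conjI allI impI ballI)
    fix y assume "y \<in> range (\<lambda>n. g (t n))"
    then obtain n where "y = t (Suc n)" by (auto simp: gt)
    thus "y \<le> a" using a by (auto simp: is_lub_def)
  next
    fix v assume H: "\<forall>y\<in>range (\<lambda>n. g (t n)). y \<le> v"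
    have "\<forall>y\<in>range t. y \<le> v"
    proof
      fix y assume "y \<in> range t" then obtain n where y: "y = t n" by auto
      show "y \<le> v"
      proof (cases n)
        case 0 then show ?thesis using b y by (simp add: t_def)
      next
        case (Suc m) then show ?thesis using H y gt by auto
      qed
    qed
    thus "a \<le> v" using a by (auto simp: is_lub_def)
  qed
  ultimately have fx: "g a = a" by (rule is_lub_unique)
  have "\<forall>p. g p \<le> p \<longrightarrow> a \<le> p"
  proof (intro allI impI)
    fix p assume gp: "g p \<le> p"
    have "t n \<le> p" for n
    proof (induction n)
      case 0 show ?case by (simp add: t_def b)
    next
      case (Suc n) have "t (Suc n) = g (t n)" by (simp add: gt)
      also have "... \<le> g p" using Suc mono by blast
      finally show ?case using gp by simp
    qed
    thus "a \<le> p" using a by (auto simp: is_lub_def)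
  qed
  with fx show ?thesis by blast
qed

lemma phi_props:
  assumes cpo: "omega_cpo TYPE('x::order)"
   and s: "(s::('l,'x) sys) \<in> NIO Lam I Out" and i: "i \<in> I" and k: "k \<in> Out"
   and x: "x \<in> (I - {i}) \<rightarrow>\<^sub>E UNIV"
  shows "fn s (x(i := phi s i k x)) k = phi s i k x \<and> (\<forall>p. fn s (x(i := p)) k \<le> p \<longrightarrow> phi s i k x \<le> p)"
proof -
  let ?g = "\<lambda>t. fn s (x(i := t)) k"
  have oc: "omega_cont I Out (fn s)" using s by (simp add: NIO_def)
  have xE: "x(i := t) \<in> I \<rightarrow>\<^sub>E UNIV" for t using x i by (auto simp: PiE_def extensional_def)
  have mono: "?g a \<le> ?g b" if "a \<le> b" for a b
  proof -
    have "pw_le I (x(i:=a)) (x(i:=b))" using that by (auto simp: pw_le_def)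
    hence "pw_le Out (fn s (x(i:=a))) (fn s (x(i:=b)))" using cont_mono[OF oc xE xE] by blast
    thus ?thesis using k by (simp add: pw_le_def)
  qed
  have cont: "is_lub (range (\<lambda>n. ?g (t n))) (?g l)" if "omega_chain t" "is_lub (range t) l" for t l
  proof -
    have c: "omega_chain_on (I - {i}) (\<lambda>n. x)" using x by (simp add: omega_chain_on_def pw_le_def)
    have u: "lub_on (I - {i}) (range (\<lambda>n. x)) x" using x by (simp add: lub_on_def pw_le_def)
    have "lub_on Out (range (\<lambda>n. fn s (x(i := t n)))) (fn s (x(i := l)))"
      using NIO_joint[OF s i c u that] by simp
    then show ?thesis using k unfolding lub_on_iff by (simp add: image_image)
  qed
  obtain a where a: "?g a = a" "\<forall>p. ?g p \<le> p \<longrightarrow> a \<le> p"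
    using kleene[where g="?g", OF cpo] mono cont by blast
  have "phi s i k x = a" unfolding phi_def
    by (rule Least_equality) (use a in auto)
  with a show ?thesis by simp
qed

lemma phi_mono:
  assumes cpo: "omega_cpo TYPE('x::order)"
   and s: "(s::('l,'x) sys) \<in> NIO Lam I Out" and i: "i \<in> I" and k: "k \<in> Out"
   and x: "x \<in> (I - {i}) \<rightarrow>\<^sub>E UNIV" and y: "y \<in> (I - {i}) \<rightarrow>\<^sub>E UNIV"
   and le: "pw_le (I - {i}) x y"
  shows "phi s i k x \<le> phi s i k y"
proof -
  have oc: "omega_cont I Out (fn s)" using s by (simp add: NIO_def)
  have xE: "x(i := t) \<in> I \<rightarrow>\<^sub>E UNIV" for t using x i by (auto simp: PiE_def extensional_def)
  have yE: "y(i := t) \<in> I \<rightarrow>\<^sub>E UNIV" for t using y i by (auto simp: PiE_def extensional_def)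
  let ?p = "phi s i k y"
  have "pw_le I (x(i:=?p)) (y(i:=?p))" using le by (auto simp: pw_le_def)
  hence "pw_le Out (fn s (x(i:=?p))) (fn s (y(i:=?p)))" using cont_mono[OF oc xE yE] by blast
  hence "fn s (x(i:=?p)) k \<le> fn s (y(i:=?p)) k" using k by (simp add: pw_le_def)
  also have "... = ?p" using phi_props[OF cpo s i k y] by blast
  finally show ?thesis using phi_props[OF cpo s i k x] by blast
qed


lemma gam_NIO:
  assumes cpo: "omega_cpo TYPE('x::order)"
   and s: "(s::('l,'x) sys) \<in> NIO Lam I Out" and i: "i \<in> I" and k: "k \<in> Out"
  shows "gam i k s \<in> NIO Lam (I - {i}) (Out - {k})"
proof -
  have oc: "omega_cont (I - {i}) (Out - {k}) (fn (gam i k s))"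
    unfolding omega_cont_def
  proof (intro allI impI, elim conjE)
    fix c :: "nat \<Rightarrow> 'l \<Rightarrow> 'x" and u assume c: "omega_chain_on (I - {i}) c" and u: "lub_on (I - {i}) (range c) u"
    define p where "p n = phi s i k (c n)" for n
    have cE: "c n \<in> (I - {i}) \<rightarrow>\<^sub>E UNIV" for n using c by (simp add: omega_chain_on_def)
    have sIO: "ins s = I" "outs s = Out" using s by (auto simp: NIO_def)
    have uE: "u \<in> (I - {i}) \<rightarrow>\<^sub>E UNIV" using u by (simp add: lub_on_def)
    have pch: "omega_chain p" unfolding omega_chain_def p_def
      using phi_mono[OF cpo s i k cE cE] c by (simp add: omega_chain_on_def)
    then obtain l where l: "is_lub (range p) l" using cpo by (auto simp: omega_cpo_def)
    have J: "lub_on Out (range (\<lambda>n. fn s ((c n)(i := p n)))) (fn s (u(i := l)))"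
      by (rule NIO_joint[OF s i c u pch l])
    have pfix: "fn s ((c n)(i := p n)) k = p n" for n
      using phi_props[OF cpo s i k cE] by (simp add: p_def)
    have "is_lub (range (\<lambda>n. fn s ((c n)(i := p n)) k)) (fn s (u(i := l)) k)"
      using J k unfolding lub_on_iff by (simp add: image_image)
    hence "is_lub (range p) (fn s (u(i := l)) k)" by (simp add: pfix)
    hence gl: "fn s (u(i := l)) k = l" using l by (rule is_lub_unique)
    have le1: "phi s i k u \<le> l" using phi_props[OF cpo s i k uE] gl by simp
    have "p n \<le> phi s i k u" for n
      unfolding p_def using phi_mono[OF cpo s i k cE uE] u by (simp add: lub_on_def)
    hence "l \<le> phi s i k u" using l by (auto simp: is_lub_def)
    hence pu: "phi s i k u = l" using le1 by simp
    have fc: "fn (gam i k s) (c n) = restrict (fn s ((c n)(i := p n))) (Out - {k})" for n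
      using cE by (simp add: gam_def p_def sIO)
    have fu: "fn (gam i k s) u = restrict (fn s (u(i := l))) (Out - {k})"
      using uE pu by (simp add: gam_def sIO)
    show "lub_on (Out - {k}) (fn (gam i k s) ` range c) (fn (gam i k s) u)"
      unfolding fu image_image fc lub_on_iff
      using J unfolding lub_on_iff by (simp add: image_image)
  qed
  show ?thesis using s oc i k
    by (auto simp: NIO_def gam_def)
qed

lemma par_NIO:
  fixes s1 s2 :: "('l,'x::order) sys"
  assumes s1: "s1 \<in> NIO Lam I1 O1" and s2: "s2 \<in> NIO Lam I2 O2"
   and disj: "lam s1 \<inter> lam s2 = {}"
  shows "par s1 s2 \<in> NIO Lam (I1 \<union> I2) (O1 \<union> O2)"
proof -
  have i1: "ins s1 = I1" "outs s1 = O1" and i2: "ins s2 = I2" "outs s2 = O2"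
    using s1 s2 by (auto simp: NIO_def)
  have oc1: "omega_cont I1 O1 (fn s1)" and oc2: "omega_cont I2 O2 (fn s2)"
    using s1 s2 by (auto simp: NIO_def)
  have rl: "lub_on J (range (\<lambda>n. restrict (c n) J)) (restrict u J)
       \<and> omega_chain_on J (\<lambda>n. restrict (c n) J)"
    if "omega_chain_on (I1 \<union> I2) c" "lub_on (I1 \<union> I2) (range c) u" "J \<subseteq> I1 \<union> I2" for c u J
  proof
    show "lub_on J (range (\<lambda>n. restrict (c n) J)) (restrict u J)"
      using that unfolding lub_on_iff by (auto simp: image_image)
    show "omega_chain_on J (\<lambda>n. restrict (c n) J)"
      using that by (auto simp: omega_chain_on_def pw_le_def)
  qed
  have oc: "omega_cont (I1 \<union> I2) (O1 \<union> O2) (fn (par s1 s2))"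
    unfolding omega_cont_def
  proof (intro allI impI, elim conjE)
    fix c :: "nat \<Rightarrow> 'l \<Rightarrow> 'x" and u assume c: "omega_chain_on (I1 \<union> I2) c" and u: "lub_on (I1 \<union> I2) (range c) u"
    have cE: "c n \<in> (I1 \<union> I2) \<rightarrow>\<^sub>E UNIV" for n using c by (simp add: omega_chain_on_def)
    have uE: "u \<in> (I1 \<union> I2) \<rightarrow>\<^sub>E UNIV" using u by (simp add: lub_on_def)
    have L1: "lub_on O1 (range (\<lambda>n. fn s1 (restrict (c n) I1))) (fn s1 (restrict u I1))"
      using rl[OF c u, of I1] oc1 unfolding omega_cont_def by (auto simp: image_image)
    have L2: "lub_on O2 (range (\<lambda>n. fn s2 (restrict (c n) I2))) (fn s2 (restrict u I2))"
      using rl[OF c u, of I2] oc2 unfolding omega_cont_def by (auto simp: image_image)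
    have fc: "(\<lambda>a. a j) ` fn (par s1 s2) ` range c = range (\<lambda>n. if j \<in> O1 then fn s1 (restrict (c n) I1) j else fn s2 (restrict (c n) I2) j)"
      if "j \<in> O1 \<union> O2" for j
    proof -
      have "fn (par s1 s2) (c n) j = (if j \<in> O1 then fn s1 (restrict (c n) I1) j else fn s2 (restrict (c n) I2) j)" for n
        using cE[of n] that by (simp add: par_def i1 i2)
      thus ?thesis by (simp add: image_image)
    qed
    show "lub_on (O1 \<union> O2) (fn (par s1 s2) ` range c) (fn (par s1 s2) u)"
      unfolding lub_on_iff
    proof (intro conjI ballI)
      show "fn (par s1 s2) u \<in> (O1 \<union> O2) \<rightarrow>\<^sub>E UNIV" using uE by (simp add: par_def i1 i2)
      fix j assume j: "j \<in> O1 \<union> O2"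
      show "is_lub ((\<lambda>a. a j) ` fn (par s1 s2) ` range c) (fn (par s1 s2) u j)"
      proof (cases "j \<in> O1")
        case True
        have "fn (par s1 s2) u j = fn s1 (restrict u I1) j" using uE j True by (simp add: par_def i1 i2)
        thus ?thesis using L1 True fc[OF j] unfolding lub_on_iff by (simp add: image_image)
      next
        case False
        hence "j \<in> O2" using j by blast
        have "fn (par s1 s2) u j = fn s2 (restrict u I2) j" using uE j False by (simp add: par_def i1 i2)
        thus ?thesis using L2 False \<open>j \<in> O2\<close> fc[OF j] unfolding lub_on_iff by (simp add: image_image)
      qed
    qed
  qed
  show ?thesis using s1 s2 disj oc
    by (auto simp: NIO_def par_def lam_def)
qed

theorem theorem5p6:
  fixes Lam :: "'l set"
  assumes "omega_cpo TYPE('x::order)"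
  shows
    "(\<forall>(s1::('l,'x) sys) s2. s1 \<in> NN Lam \<and> s2 \<in> NN Lam \<and> lam s1 \<inter> lam s2 = {} \<longrightarrow>
        par s1 s2 \<in> NIO Lam (ins s1 \<union> ins s2) (outs s1 \<union> outs s2) \<and>
        lam (par s1 s2) = lam s1 \<union> lam s2 \<and>
        (\<forall>i k. i \<in> lam s1 \<and> k \<in> lam s1 \<longrightarrow> ({i, k} \<in> Gam (par s1 s2) \<longleftrightarrow> {i, k} \<in> Gam s1)) \<and>
        (\<forall>i k. i \<in> lam s2 \<and> k \<in> lam s2 \<longrightarrow> ({i, k} \<in> Gam (par s1 s2) \<longleftrightarrow> {i, k} \<in> Gam s2)))
     \<and> (\<forall>I Out (s::('l,'x) sys) i k. s \<in> NIO Lam I Out \<and> i \<in> I \<and> k \<in> Out \<longrightarrow>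
        gam i k s \<in> NIO Lam (I - {i}) (Out - {k}) \<and> lam (gam i k s) = lam s - {i, k})"
proof (intro conjI allI impI; elim conjE)
  fix s1 s2 :: "('l,'x) sys"
  assume n1: "s1 \<in> NN Lam" and n2: "s2 \<in> NN Lam" and d: "lam s1 \<inter> lam s2 = {}"
  obtain I1 O1 where s1: "s1 \<in> NIO Lam I1 O1" using n1 by (auto simp: NN_def)
  obtain I2 O2 where s2: "s2 \<in> NIO Lam I2 O2" using n2 by (auto simp: NN_def)
  have i1: "ins s1 = I1" "outs s1 = O1" "I1 \<inter> O1 = {}" and i2: "ins s2 = I2" "outs s2 = O2" "I2 \<inter> O2 = {}"
    using s1 s2 by (auto simp: NIO_def)
  show "par s1 s2 \<in> NIO Lam (ins s1 \<union> ins s2) (outs s1 \<union> outs s2)"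
    using par_NIO[OF s1 s2 d] i1 i2 by simp
  show "lam (par s1 s2) = lam s1 \<union> lam s2" by (auto simp: lam_def par_def)
  show "{i, k} \<in> Gam (par s1 s2) \<longleftrightarrow> {i, k} \<in> Gam s1" if "i \<in> lam s1" "k \<in> lam s1" for i k
    using that d unfolding Gam_def lam_def par_def
    by (simp add: doubleton_eq_iff) blast
  show "{i, k} \<in> Gam (par s1 s2) \<longleftrightarrow> {i, k} \<in> Gam s2" if "i \<in> lam s2" "k \<in> lam s2" for i k
    using that d unfolding Gam_def lam_def par_def
    by (simp add: doubleton_eq_iff) blast
next
  fix I Out i k and s :: "('l,'x) sys"
  assume s: "s \<in> NIO Lam I Out" and i: "i \<in> I" and k: "k \<in> Out"
  show "gam i k s \<in> NIO Lam (I - {i}) (Out - {k})" by (rule gam_NIO[OF assms s i k])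
  show "lam (gam i k s) = lam s - {i, k}"
    using s i k by (auto simp: lam_def gam_def NIO_def)
qed

end
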